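(* Let $m\ge3$ and let $\lambda_1$ be a $\mathbb{Z}_2$-characteristic map over $P_m$ whose $\mathbf b\mathbf c$-pieces are $s_1,\dots,s_k$ (so that, cyclically, $\lambda_1=\mathbf a s_1\mathbf a s_2\mathbf a\cdots\mathbf a s_k$ with $k=|\lambda_1^{-1}(\mathbf a)|$). Let $p\neq q$ be vertices with $\lambda_1(p)=\lambda_1(q)=\mathbf a$. For each $i$ let $\phi_i,\psi_i$ each be either the identity or the inversion, and let $\lambda_2=\mathbf a\phi_1(s_1)\mathbf a\cdots\mathbf a\phi_k(s_k)$, $\lambda_3=\mathbf a\psi_1(s_1)\mathbf a\cdots\mathbf a\psi_k(s_k)$, and $\lambda_4=\mathbf a\psi_1(\phi_1(s_1))\mathbf a\cdots\mathbf a\psi_k(\phi_k(s_k))$. Then there exists a $\mathbb{Z}_2$-characteristic map $\Lambda$ over $\mathrm{wed}_{p,q}P_m$ with $\operatorname{proj}_{\{p_2,q_2\}}\Lambda\simeq\lambda_1$, $\operatorname{proj}_{\{p_1,q_2\}}\Lambda\simeq\lambda_2$, $\operatorname{proj}_{\{p_2,q_1\}}\Lambda\simeq\lambda_3$, $\operatorname{proj}_{\{p_1,q_1\}}\Lambda\simeq\lambda_4$; i.e. the edges $\{\lambda_1,\lambda_2,p\}$ and $\{\lambda_1,\lambda_3,q\}$ span a realizable square with fourth node $\lambda_4$. (Every D-J class $p$-adjacent (resp. $q$-adjacent) to $\lambda_1$ has a representative of the form of $\lambda_2$ (resp. $\lambda_3$), so any two such edges span a realizable square.)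
   Context: $P_m$: simplicial complex on $[m]$ with facets $\{i,i+1\}$ mod $m$. $\mathbf a=(1,0)^T,\mathbf b=(0,1)^T,\mathbf c=(1,1)^T$; a $\mathbb{Z}_2$-characteristic map over $P_m$ is a cyclic word $\lambda\colon[m]\to\{\mathbf a,\mathbf b,\mathbf c\}$ with cyclically consecutive letters distinct; D-J equivalence ($\simeq$) is composition with $GL(2,\mathbb{Z}_2)$ (permutations of letters). $\mathbf b\mathbf c$-pieces: restrictions of $\lambda$ to maximal cyclic intervals of $[m]\setminus\lambda^{-1}(\mathbf a)$; inversion swaps $\mathbf b,\mathbf c$ on a piece. For a simplicial complex $K$ and vertices $p\ne q$, $\mathrm{wed}_{p,q}K$ has vertex set $(V\setminus\{p,q\})\cup\{p_1,p_2,q_1,q_2\}$ and minimal non-faces obtained from those of $K$ by replacing $p$ by $p_1,p_2$ and $q$ by $q_1,q_2$ whenever they occur. A $\mathbb{Z}_2$-characteristic map over an $(n-1)$-dimensional complex is a map to $\mathbb{Z}_2^n$ sending vertices of each face to linearly independent vectors. For a face $\sigma$, $\operatorname{proj}_\sigma\Lambda(w)=[\Lambda(w)]\in\mathbb{Z}_2^n/\langle\Lambda(v):v\in\sigma\rangle$ on $\operatorname{lk}\sigma$. The link of $\{p_i,q_j\}$ in $\mathrm{wed}_{p,q}P_m$ is identified with $P_m$ via $p_{3-i}\mapsto p$, $q_{3-j}\mapsto q$, identity elsewhere. *)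

theory Defs
  imports "HOL-Analysis.Analysis" "HOL-Library.Z2"
begin

definition min_nonfaces :: "'v set \<Rightarrow> 'v set set \<Rightarrow> 'v set set" where
  "min_nonfaces V K = {\<sigma>. \<sigma> \<subseteq> V \<and> \<sigma> \<notin> K \<and> (\<forall>\<tau>. \<tau> \<subset> \<sigma> \<longrightarrow> \<tau> \<in> K)}"

text \<open>Vertices of the wedge: an old vertex v is (v,0); p_i is (p,i), q_j is (q,j), i,j in {1,2}.\<close>

definition wed_vertices :: "'v set \<Rightarrow> 'v \<Rightarrow> 'v \<Rightarrow> ('v \<times> nat) set" where
  "wed_vertices V p q = (\<lambda>v. (v, 0)) ` (V - {p, q}) \<union> {(p,1), (p,2), (q,1), (q,2)}"

definition wed_replace :: "'v \<Rightarrow> 'v \<Rightarrow> 'v set \<Rightarrow> ('v \<times> nat) set" where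
  "wed_replace p q \<sigma> = (\<lambda>v. (v, 0)) ` (\<sigma> - {p, q})
      \<union> (if p \<in> \<sigma> then {(p,1), (p,2)} else {})
      \<union> (if q \<in> \<sigma> then {(q,1), (q,2)} else {})"

text \<open>The complex on the wedge vertex set whose minimal non-faces are the replaced
  minimal non-faces of K: faces are the vertex subsets containing none of them.\<close>

definition wed :: "'v set \<Rightarrow> 'v set set \<Rightarrow> 'v \<Rightarrow> 'v \<Rightarrow> ('v \<times> nat) set set" where
  "wed V K p q = {\<tau>. \<tau> \<subseteq> wed_vertices V p q \<and>
       (\<forall>\<sigma>\<in>min_nonfaces V K. \<not> wed_replace p q \<sigma> \<subseteq> \<tau>)}"

definition cyc_next :: "nat \<Rightarrow> nat \<Rightarrow> nat" where
  "cyc_next m i = i mod m + 1"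

definition P_cycle :: "nat \<Rightarrow> nat set set" where
  "P_cycle m = {\<sigma>. \<exists>i\<in>{1..m}. \<sigma> \<subseteq> {i, cyc_next m i}}"

definition char_map :: "'v set set \<Rightarrow> ('v \<Rightarrow> bit ^ 'n) \<Rightarrow> bool" where
  "char_map K \<Lambda> \<longleftrightarrow> (\<forall>\<sigma>\<in>K. inj_on \<Lambda> \<sigma> \<and> vec.independent (\<Lambda> ` \<sigma>))"

definition va :: "bit ^ 2" where "va = vector [1, 0]"
definition vb :: "bit ^ 2" where "vb = vector [0, 1]"
definition vc :: "bit ^ 2" where "vc = vector [1, 1]"

text \<open>Z_2-characteristic map over P_m as a cyclic word in a,b,c with cyclically
  consecutive letters distinct.\<close>

definition char_word :: "nat \<Rightarrow> (nat \<Rightarrow> bit ^ 2) \<Rightarrow> bool" where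
  "char_word m w \<longleftrightarrow> (\<forall>i\<in>{1..m}. w i \<in> {va, vb, vc} \<and> w i \<noteq> w (cyc_next m i))"

definition swap_bc :: "bit ^ 2 \<Rightarrow> bit ^ 2" where
  "swap_bc x = (if x = vb then vc else if x = vc then vb else x)"

text \<open>A choice (identity / inversion) for each bc-piece of \<lambda>: a boolean flag per position
  which is constant along each bc-piece, i.e. equal at cyclically consecutive
  positions both not labelled a.\<close>

definition piece_choice :: "nat \<Rightarrow> (nat \<Rightarrow> bit ^ 2) \<Rightarrow> (nat \<Rightarrow> bool) \<Rightarrow> bool" where
  "piece_choice m w \<phi> \<longleftrightarrow>
     (\<forall>i\<in>{1..m}. w i \<noteq> va \<and> w (cyc_next m i) \<noteq> va \<longrightarrow> \<phi> i = \<phi> (cyc_next m i))"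

definition invert_pieces :: "(nat \<Rightarrow> bool) \<Rightarrow> (nat \<Rightarrow> bit ^ 2) \<Rightarrow> nat \<Rightarrow> bit ^ 2" where
  "invert_pieces \<phi> w = (\<lambda>i. if \<phi> i then swap_bc (w i) else w i)"

text \<open>Identification of the link of {p_i, q_j} in wed_{p,q} P_m with P_m:
  p_{3-i} \<mapsto> p, q_{3-j} \<mapsto> q, identity elsewhere (we give the inverse map).\<close>

definition link_vertex :: "nat \<Rightarrow> nat \<Rightarrow> nat \<Rightarrow> nat \<Rightarrow> nat \<Rightarrow> nat \<times> nat" where
  "link_vertex p q i j v = (if v = p then (p, 3 - i) else if v = q then (q, 3 - j) else (v, 0))"

text \<open>proj_{p_i,q_j} \<Lambda> \<simeq> \<lambda>: there is a linear isomorphism of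
  Z_2^4 / <\<Lambda>(p_i), \<Lambda>(q_j)> onto Z_2^2 (given as a surjective linear map Z_2^4 \<rightarrow> Z_2^2,
  i.e. a 2x4 matrix, with kernel exactly that span) carrying the projected map to \<lambda>.
  Composing with GL(2,Z_2) is absorbed into the choice of the isomorphism.\<close>

definition proj_DJ_eq ::
  "nat \<Rightarrow> nat \<Rightarrow> nat \<Rightarrow> (nat \<times> nat \<Rightarrow> bit ^ 4) \<Rightarrow> nat \<Rightarrow> nat \<Rightarrow> (nat \<Rightarrow> bit ^ 2) \<Rightarrow> bool" where
  "proj_DJ_eq m p q \<Lambda> i j w \<longleftrightarrow>
     (\<exists>M :: bit ^ 4 ^ 2.
        surj (\<lambda>x. M *v x) \<and>
        {x. M *v x = 0} = vec.span {\<Lambda> (p, i), \<Lambda> (q, j)} \<and>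
        (\<forall>v\<in>{1..m}. M *v \<Lambda> (link_vertex p q i j v) = w v))"

end

theory Submission imports Defs begin

lemma bit_add_self[simp]: "(a::bit) + a = 0" by (cases a) auto
lemma vec_add_self[simp]: "(x::bit^'n) + x = 0" by (simp add: vec_eq_iff)
lemma bit_minus_eq[simp]: "(x::bit^'n) - y = x + y" by (simp add: vec_eq_iff)
lemma bit_cases2: "(k::bit) = 0 \<or> k = 1" by (cases k) auto
lemma vadd_eq0: "(x::bit^'n) + y = 0 \<longleftrightarrow> x = y"
  by (metis add.assoc add_0 vec_add_self)

lemma span1: "x \<in> vec.span {u} \<longleftrightarrow> x = 0 \<or> x = (u::bit^'n)"
proof -
  have "x \<in> vec.span {u} \<longleftrightarrow> (\<exists>k::bit. x = k *s u)"
    by (simp add: vec.span_insert vadd_eq0)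
  also have "\<dots> \<longleftrightarrow> x = 0 \<or> x = u"
    apply (rule iffI)
     apply (erule exE) subgoal for k using bit_cases2[of k] by auto
    apply (erule disjE)
     apply (rule exI[of _ 0]) apply simp
    apply (rule exI[of _ 1]) apply simp
    done
  finally show ?thesis .
qed

lemma span_ins: "x \<in> vec.span (insert u S) \<longleftrightarrow> x \<in> vec.span S \<or> x + (u::bit^'n) \<in> vec.span S"
proof -
  have "x \<in> vec.span (insert u S) \<longleftrightarrow> (\<exists>k::bit. x + k *s u \<in> vec.span S)"
    by (simp add: vec.span_insert)
  also have "\<dots> \<longleftrightarrow> x \<in> vec.span S \<or> x + u \<in> vec.span S"
    apply (rule iffI)
     apply (erule exE) subgoal for k using bit_cases2[of k] by auto
    apply (erule disjE)
     apply (rule exI[of _ 0]) apply simp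
    apply (rule exI[of _ 1]) apply simp
    done
  finally show ?thesis .
qed

definition vec4 :: "bit \<Rightarrow> bit \<Rightarrow> bit \<Rightarrow> bit \<Rightarrow> bit^4" where
  "vec4 a b c d = (\<chi> i. if i = 1 then a else if i = 2 then b else if i = 3 then c else d)"

lemma vec4_nth[simp]: "vec4 a b c d $ 1 = a" "vec4 a b c d $ 2 = b" "vec4 a b c d $ 3 = c" "vec4 a b c d $ 4 = d"
  by (simp_all add: vec4_def)
lemma vec4_eq[simp]: "vec4 a b c d = vec4 a' b' c' d' \<longleftrightarrow> a = a' \<and> b = b' \<and> c = c' \<and> d = d'"
  by (auto simp: vec_eq_iff forall_4)
lemma vec4_0: "(0::bit^4) = vec4 0 0 0 0" by (simp add: vec_eq_iff forall_4)
lemma vec4_eq0[simp]: "vec4 a b c d = 0 \<longleftrightarrow> a = 0 \<and> b = 0 \<and> c = 0 \<and> d = 0"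
  by (simp add: vec4_0)
lemma vec4_add[simp]: "vec4 a b c d + vec4 a' b' c' d' = vec4 (a+a') (b+b') (c+c') (d+d')"
  by (simp add: vec_eq_iff forall_4)
lemma vec4_all: "(x::bit^4) = vec4 (x$1) (x$2) (x$3) (x$4)"
  by (simp add: vec_eq_iff forall_4)
definition good4 :: "bit^4 \<Rightarrow> bit^4 \<Rightarrow> bit^4 \<Rightarrow> bit^4 \<Rightarrow> bool" where
  "good4 x y z w \<longleftrightarrow> x \<noteq> 0 \<and> y \<noteq> 0 \<and> z \<noteq> 0 \<and> w \<noteq> 0 \<and>
     x + y \<noteq> 0 \<and> x + z \<noteq> 0 \<and> x + w \<noteq> 0 \<and> y + z \<noteq> 0 \<and> y + w \<noteq> 0 \<and> z + w \<noteq> 0 \<and>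
     x + y + z \<noteq> 0 \<and> x + y + w \<noteq> 0 \<and> x + z + w \<noteq> 0 \<and> y + z + w \<noteq> 0 \<and> x + y + z + w \<noteq> 0"

lemma good4_indep:
  assumes "good4 x y z w"
  shows "vec.independent {x, y, z, w}"
  using assms unfolding good4_def
  by (simp add: vec.independent_insert span_ins vadd_eq0)


lemma va_nth[simp]: "va$1 = 1" "va$2 = 0" and vb_nth[simp]: "vb$1 = 0" "vb$2 = 1" and vc_nth[simp]: "vc$1 = 1" "vc$2 = 1"
  by (simp_all add: va_def vb_def vc_def)
lemma vabc_neq[simp]: "va \<noteq> vb" "vb \<noteq> va" "va \<noteq> vc" "vc \<noteq> va" "vb \<noteq> vc" "vc \<noteq> vb"
  by (simp_all add: vec_eq_iff forall_2)

definition vecV :: "bit^2 \<Rightarrow> bool \<Rightarrow> bool \<Rightarrow> bit^4" where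
  "vecV x f g = vec4 (x$1) (x$2) (of_bool (f \<and> x \<noteq> va)) (of_bool (g \<and> x \<noteq> va))"

lemma goodP0: "good4 (vec4 1 0 1 0) (vec4 0 0 1 0) (vec4 0 1 0 0) (vec4 0 0 0 1)" by (simp add: good4_def)
lemma goodP: "x \<in> {vb, vc} \<Longrightarrow> good4 (vec4 1 0 1 0) (vec4 0 0 1 0) (vecV x f g) (vec4 c 0 0 1)"
  by (cases c; cases f; cases g) (auto simp: good4_def vecV_def)
lemma goodQ: "x \<in> {vb, vc} \<Longrightarrow> good4 (vec4 1 0 0 1) (vec4 0 0 0 1) (vecV x f g) (vec4 c 0 1 0)"
  by (cases c; cases f; cases g) (auto simp: good4_def vecV_def)
lemma goodN: "x \<in> {va, vb, vc} \<Longrightarrow> y \<in> {va, vb, vc} \<Longrightarrow> x \<noteq> y \<Longrightarrow>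
   (x \<noteq> va \<and> y \<noteq> va \<longrightarrow> f = f' \<and> g = g') \<Longrightarrow>
   good4 (vecV x f g) (vecV y f' g') (vec4 c 0 1 0) (vec4 d 0 0 1)"
  apply (elim insertE emptyE; simp only: vabc_neq simp_thms)
  apply (cases c; cases d; cases f'; cases g'; simp add: good4_def vecV_def)
  apply (cases c; cases d; cases f'; cases g'; simp add: good4_def vecV_def)
  apply (cases c; cases d; cases f; cases g; simp add: good4_def vecV_def)
  apply (cases c; cases d; cases f; cases g; simp add: good4_def vecV_def)
  apply (cases c; cases d; cases f; cases g; simp add: good4_def vecV_def)
  apply (cases c; cases d; cases f; cases g; simp add: good4_def vecV_def)
  done
lemma good_sub:
  assumes "\<tau> \<subseteq> {y1, y2, y3, y4}" "good4 (L y1) (L y2) (L y3) (L y4)"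
  shows "inj_on L \<tau> \<and> vec.independent (L ` \<tau>)"
proof
  show "inj_on L \<tau>" unfolding inj_on_def
  proof (intro ballI impI)
    fix x y assume "x \<in> \<tau>" "y \<in> \<tau>" "L x = L y"
    then have "x \<in> {y1, y2, y3, y4}" "y \<in> {y1, y2, y3, y4}" using assms(1) by auto
    moreover have "L y1 \<noteq> L y2" "L y1 \<noteq> L y3" "L y1 \<noteq> L y4" "L y2 \<noteq> L y3" "L y2 \<noteq> L y4" "L y3 \<noteq> L y4"
      using assms(2) unfolding good4_def by (simp_all add: vadd_eq0)
    ultimately show "x = y" using \<open>L x = L y\<close> 
      by (smt (verit) insertE singletonD)
  qed
  have "L ` \<tau> \<subseteq> {L y1, L y2, L y3, L y4}" using assms(1) by auto
  then show "vec.independent (L ` \<tau>)"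
    using good4_indep[OF assms(2)] vec.independent_mono by blast
qed

lemma sum4: "(\<Sum>j\<in>(UNIV::4 set). f j) = f 1 + f 2 + f 3 + (f 4 :: 'a::comm_monoid_add)"
proof -
  have d: "(1::4) \<notin> {2,3,4}" "(2::4) \<notin> {3,4}" "(3::4) \<notin> {4}" "(4::4) \<notin> {}" by simp_all
  show ?thesis unfolding UNIV_4
    by (simp only: sum.insert[OF _ d(1)] sum.insert[OF _ d(2)] sum.insert[OF _ d(3)] sum.insert[OF _ d(4)] sum.empty finite.intros add.assoc add_0_right insert_not_empty)
qed
definition Mat :: "bit \<Rightarrow> bit \<Rightarrow> bit^4^2" where
  "Mat c d = vector [vec4 1 0 c d, vec4 0 1 0 0]"

lemma Mat_mult: "Mat c d *v vec4 x1 x2 x3 x4 = vector [x1 + c * x3 + d * x4, x2]"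
  unfolding vec_eq_iff forall_2 matrix_vector_mult_def sum4 by (simp add: Mat_def)

lemma vec2_eq: "(vector [a, b] :: bit^2) = x \<longleftrightarrow> a = x$1 \<and> b = x$2"
  by (auto simp: vec_eq_iff forall_2)
lemma vec2_eq0: "(vector [a, b] :: bit^2) = 0 \<longleftrightarrow> a = 0 \<and> b = 0"
  by (simp add: vec2_eq)

lemma Mat_kernel: "{x. Mat c d *v x = 0} = vec.span {vec4 c 0 1 0, vec4 d 0 0 1}"
proof (rule set_eqI)
  fix x :: "bit^4"
  obtain a b e f where x: "x = vec4 a b e f" using vec4_all by blast
  show "x \<in> {x. Mat c d *v x = 0} \<longleftrightarrow> x \<in> vec.span {vec4 c 0 1 0, vec4 d 0 0 1}"
    unfolding x span_ins span1
    by (cases a; cases b; cases e; cases f; cases c; cases d; simp add: Mat_mult vec2_eq0)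
qed

lemma Mat_surj: "surj (\<lambda>x. Mat c d *v x)"
proof (rule surjI)
  fix y :: "bit^2"
  show "Mat c d *v vec4 (y$1) (y$2) 0 0 = y" by (simp add: Mat_mult vec2_eq)
qed

definition invb :: "bool \<Rightarrow> bit^2 \<Rightarrow> bit^2" where
  "invb b x = (if b then swap_bc x else x)"

lemma swap_simps[simp]: "swap_bc va = va" "swap_bc vb = vc" "swap_bc vc = vb"
  by (simp_all add: swap_bc_def)

lemma Mat_vecV: "x \<in> {va, vb, vc} \<Longrightarrow>
  Mat (of_bool s) (of_bool t) *v vecV x f g = invb (t \<and> g) (invb (s \<and> f) x)"
  unfolding vecV_def Mat_mult
  by (elim insertE emptyE; cases s; cases t; cases f; cases g; simp add: invb_def vec2_eq)

definition Lam :: "(nat \<Rightarrow> bit^2) \<Rightarrow> (nat \<Rightarrow> bool) \<Rightarrow> (nat \<Rightarrow> bool) \<Rightarrow> nat \<Rightarrow> nat \<times> nat \<Rightarrow> bit^4" where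
  "Lam l \<phi> \<psi> p = (\<lambda>(v, k). if k = 0 then vecV (l v) (\<phi> v) (\<psi> v)
      else if v = p then vec4 (of_bool (k = 1)) 0 1 0 else vec4 (of_bool (k = 1)) 0 0 1)"

lemma proj_lemma:
  assumes "i \<in> {1,2}" "j \<in> {1,2}" "p \<noteq> q" "l p = va" "l q = va"
    and vals: "\<forall>v\<in>{1..m}. l v \<in> {va, vb, vc}"
    and w: "\<forall>v\<in>{1..m}. w v = invb (j = 1 \<and> \<psi> v) (invb (i = 1 \<and> \<phi> v) (l v))"
  shows "proj_DJ_eq m p q (Lam l \<phi> \<psi> p) i j w"
  unfolding proj_DJ_eq_def
proof (intro exI[of _ "Mat (of_bool (i = 1)) (of_bool (j = 1))"] conjI)
  show "surj (\<lambda>x. Mat (of_bool (i = 1)) (of_bool (j = 1)) *v x)" by (rule Mat_surj)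
  have "Lam l \<phi> \<psi> p (p, i) = vec4 (of_bool (i = 1)) 0 1 0" "Lam l \<phi> \<psi> p (q, j) = vec4 (of_bool (j = 1)) 0 0 1"
    using assms(1,2,3) by (auto simp: Lam_def)
  then show "{x. Mat (of_bool (i = 1)) (of_bool (j = 1)) *v x = 0} = vec.span {Lam l \<phi> \<psi> p (p, i), Lam l \<phi> \<psi> p (q, j)}"
    by (simp only: Mat_kernel)
  show "\<forall>v\<in>{1..m}. Mat (of_bool (i = 1)) (of_bool (j = 1)) *v Lam l \<phi> \<psi> p (link_vertex p q i j v) = w v"
  proof
    fix v assume v: "v \<in> {1..m}"
    show "Mat (of_bool (i = 1)) (of_bool (j = 1)) *v Lam l \<phi> \<psi> p (link_vertex p q i j v) = w v"
    proof (cases "v = p \<or> v = q")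
      case True
      then show ?thesis using assms(1,2,3,4,5) w v
        by (auto simp: link_vertex_def Lam_def Mat_mult invb_def vec2_eq)
    next
      case False
      then have "Lam l \<phi> \<psi> p (link_vertex p q i j v) = vecV (l v) (\<phi> v) (\<psi> v)"
        by (simp add: link_vertex_def Lam_def)
      then show ?thesis using Mat_vecV[of "l v"] vals w v by auto
    qed
  qed
qed

lemma wed_face:
  assumes "\<tau> \<in> wed {1..m} (P_cycle m) p q"
  defines "S \<equiv> {v\<in>{1..m}. ((v,0)\<in>\<tau> \<and> v\<notin>{p,q}) \<or> (v\<in>{p,q} \<and> (v,1)\<in>\<tau> \<and> (v,2)\<in>\<tau>)}"
  shows "\<exists>i\<in>{1..m}. S \<subseteq> {i, cyc_next m i}"
proof -
  have SV: "S \<subseteq> {1..m}" unfolding S_def by (rule subsetI) (erule CollectE, erule conjunct1)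
  have "S \<in> P_cycle m"
  proof (rule ccontr)
    assume nS: "S \<notin> P_cycle m"
    obtain \<sigma> where \<sigma>: "\<sigma> \<subseteq> S \<and> \<sigma> \<notin> P_cycle m"
      and min: "\<forall>\<sigma>'. \<sigma>' \<subseteq> S \<and> \<sigma>' \<notin> P_cycle m \<longrightarrow> card \<sigma> \<le> card \<sigma>'"
      using ex_has_least_nat[of "\<lambda>\<sigma>. \<sigma> \<subseteq> S \<and> \<sigma> \<notin> P_cycle m" S card] nS by (metis order_refl)
    have fin: "finite \<sigma>" using \<sigma> SV finite_subset by (metis finite_atLeastAtMost)
    have "\<sigma> \<in> min_nonfaces {1..m} (P_cycle m)"
      unfolding min_nonfaces_def
    proof (intro CollectI conjI allI impI)
      show "\<sigma> \<subseteq> {1..m}" using \<sigma> SV by (meson order_trans)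
      show "\<sigma> \<notin> P_cycle m" using \<sigma> by (rule conjunct2)
      fix \<tau>' assume ps: "\<tau>' \<subset> \<sigma>"
      then have "card \<tau>' < card \<sigma>" using fin psubset_card_mono by blast
      then have "\<not> (\<tau>' \<subseteq> S \<and> \<tau>' \<notin> P_cycle m)" using min by (meson not_le)
      moreover have "\<tau>' \<subseteq> S" using ps \<sigma> by (meson order_trans psubset_imp_subset)
      ultimately show "\<tau>' \<in> P_cycle m" by blast
    qed
    moreover have "wed_replace p q \<sigma> \<subseteq> \<tau>"
    proof
      fix x assume "x \<in> wed_replace p q \<sigma>"
      then consider v where "x = (v,0)" "v \<in> \<sigma>" "v \<notin> {p,q}" | "p \<in> \<sigma>" "x \<in> {(p,1),(p,2)}" | "q \<in> \<sigma>" "x \<in> {(q,1),(q,2)}"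
        unfolding wed_replace_def by (auto split: if_splits)
      then show "x \<in> \<tau>"
      proof cases
        case 1 then have "v \<in> S" using \<sigma> by blast
        then show ?thesis using 1 unfolding S_def by blast
      next
        case 2 then have "p \<in> S" using \<sigma> by blast
        then show ?thesis using 2 unfolding S_def by blast
      next
        case 3 then have "q \<in> S" using \<sigma> by blast
        then show ?thesis using 3 unfolding S_def by blast
      qed
    qed
    ultimately show False using assms(1) unfolding wed_def by blast
  qed
  then show ?thesis unfolding P_cycle_def by (rule CollectD)
qed

lemma next_in: "i \<in> {1..m} \<Longrightarrow> cyc_next m i \<in> {1..m}"
proof -
  assume a: "i \<in> {1..m}"
  then have "0 < m" by simp
  then have "i mod m < m" by simp
  then show ?thesis unfolding cyc_next_def by simp
qed

lemma next_neq: "i \<in> {1..m} \<Longrightarrow> 2 \<le> m \<Longrightarrow> cyc_next m i \<noteq> i"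
  unfolding cyc_next_def
proof -
  assume a: "i \<in> {1..m}" "2 \<le> m"
  show "i mod m + 1 \<noteq> i"
  proof (cases "i = m")
    case True then show ?thesis using a by simp
  next
    case False then have "i < m" using a by simp
    then show ?thesis by simp
  qed
qed

lemma Lam_simps:
  "Lam l \<phi> \<psi> p (v, 0) = vecV (l v) (\<phi> v) (\<psi> v)"
  "k \<noteq> 0 \<Longrightarrow> Lam l \<phi> \<psi> p (p, k) = vec4 (of_bool (k = 1)) 0 1 0"
  "k \<noteq> 0 \<Longrightarrow> q \<noteq> p \<Longrightarrow> Lam l \<phi> \<psi> p (q, k) = vec4 (of_bool (k = 1)) 0 0 1"
  by (simp_all add: Lam_def)

theorem mainTheorem4:
  fixes m p q :: nat and l1 :: "nat \<Rightarrow> bit ^ 2" and \<phi> \<psi> :: "nat \<Rightarrow> bool"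
  assumes "m \<ge> 3"
    and "char_word m l1"
    and "p \<in> {1..m}" and "q \<in> {1..m}" and "p \<noteq> q"
    and "l1 p = va" and "l1 q = va"
    and "piece_choice m l1 \<phi>" and "piece_choice m l1 \<psi>"
  shows "\<exists>\<Lambda> :: nat \<times> nat \<Rightarrow> bit ^ 4.
           char_map (wed {1..m} (P_cycle m) p q) \<Lambda> \<and>
           proj_DJ_eq m p q \<Lambda> 2 2 l1 \<and>
           proj_DJ_eq m p q \<Lambda> 1 2 (invert_pieces \<phi> l1) \<and>
           proj_DJ_eq m p q \<Lambda> 2 1 (invert_pieces \<psi> l1) \<and>
           proj_DJ_eq m p q \<Lambda> 1 1 (invert_pieces \<psi> (invert_pieces \<phi> l1))"
proof -
  define \<Lambda> where "\<Lambda> = Lam l1 \<phi> \<psi> p"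
  have m2: "2 \<le> m" using assms(1) by simp
  have vals: "\<forall>v\<in>{1..m}. l1 v \<in> {va, vb, vc}" using assms(2) unfolding char_word_def by blast
  have adj: "\<And>i. i \<in> {1..m} \<Longrightarrow> l1 i \<noteq> l1 (cyc_next m i)"
    using assms(2) unfolding char_word_def by blast
  have pc\<phi>: "\<And>i. i \<in> {1..m} \<Longrightarrow> l1 i \<noteq> va \<and> l1 (cyc_next m i) \<noteq> va \<Longrightarrow> \<phi> i = \<phi> (cyc_next m i)"
    using assms(8) unfolding piece_choice_def by blast
  have pc\<psi>: "\<And>i. i \<in> {1..m} \<Longrightarrow> l1 i \<noteq> va \<and> l1 (cyc_next m i) \<noteq> va \<Longrightarrow> \<psi> i = \<psi> (cyc_next m i)"
    using assms(9) unfolding piece_choice_def by blast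
  have qp: "q \<noteq> p" using assms(5) by simp
  have L0: "\<And>v. \<Lambda> (v, 0) = vecV (l1 v) (\<phi> v) (\<psi> v)" unfolding \<Lambda>_def by (rule Lam_simps)
  have Lp: "\<And>k. k \<noteq> 0 \<Longrightarrow> \<Lambda> (p, k) = vec4 (of_bool (k = 1)) 0 1 0" unfolding \<Lambda>_def by (rule Lam_simps)
  have Lq: "\<And>k. k \<noteq> 0 \<Longrightarrow> \<Lambda> (q, k) = vec4 (of_bool (k = 1)) 0 0 1" unfolding \<Lambda>_def by (rule Lam_simps(3)[OF _ qp])
  have cm: "char_map (wed {1..m} (P_cycle m) p q) \<Lambda>"
    unfolding char_map_def
  proof
    fix \<tau> assume \<tau>: "\<tau> \<in> wed {1..m} (P_cycle m) p q"
    define S where "S \<equiv> {v\<in>{1..m}. ((v,0)\<in>\<tau> \<and> v\<notin>{p,q}) \<or> (v\<in>{p,q} \<and> (v,1)\<in>\<tau> \<and> (v,2)\<in>\<tau>)}"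
    obtain i where i: "i \<in> {1..m}" "S \<subseteq> {i, cyc_next m i}"
      using wed_face[OF \<tau>, folded S_def] by blast
    define n where "n = cyc_next m i"
    have n: "n \<in> {1..m}" "n \<noteq> i" "l1 i \<noteq> l1 n"
      using next_in[OF i(1)] next_neq[OF i(1) m2] adj[OF i(1)] unfolding n_def by auto
    have Sin: "S \<subseteq> {i, n}" using i(2) unfolding n_def .
    have notboth: "\<not> (p \<in> {i,n} \<and> q \<in> {i,n})"
    proof
      assume "p \<in> {i,n} \<and> q \<in> {i,n}"
      then have "l1 i = va \<and> l1 n = va" using assms(5,6,7) by auto
      then show False using n(3) by simp
    qed
    have sub: "\<tau> \<subseteq> wed_vertices {1..m} p q" using \<tau> unfolding wed_def by blast
    have mem: "\<And>v k. (v,k) \<in> \<tau> \<Longrightarrow> (k = 0 \<and> v \<in> {1..m} \<and> v \<notin> {p,q}) \<or> (v = p \<and> k \<in> {1,2}) \<or> (v = q \<and> k \<in> {1,2})"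
      using sub unfolding wed_vertices_def by blast
    have S0: "\<And>v. (v,0) \<in> \<tau> \<Longrightarrow> v \<notin> {p,q} \<Longrightarrow> v \<in> {i,n}"
    proof -
      fix v assume a: "(v,0) \<in> \<tau>" "v \<notin> {p,q}"
      then have "v \<in> {1..m}" using mem by blast
      then have "v \<in> S" using a unfolding S_def by blast
      then show "v \<in> {i,n}" using Sin by blast
    qed
    have Sp: "(p,1) \<in> \<tau> \<Longrightarrow> (p,2) \<in> \<tau> \<Longrightarrow> p \<in> {i,n}"
    proof -
      assume "(p,1) \<in> \<tau>" "(p,2) \<in> \<tau>"
      then have "p \<in> S" using assms(3) unfolding S_def by blast
      then show "p \<in> {i,n}" using Sin by blast
    qed
    have Sq: "(q,1) \<in> \<tau> \<Longrightarrow> (q,2) \<in> \<tau> \<Longrightarrow> q \<in> {i,n}"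
    proof -
      assume "(q,1) \<in> \<tau>" "(q,2) \<in> \<tau>"
      then have "q \<in> S" using assms(4) unfolding S_def by blast
      then show "q \<in> {i,n}" using Sin by blast
    qed
    define ip where "ip = (if (p,1) \<in> \<tau> then 1 else (2::nat))"
    define jq where "jq = (if (q,1) \<in> \<tau> then 1 else (2::nat))"
    have ip0: "ip \<noteq> 0" and jq0: "jq \<noteq> 0" unfolding ip_def jq_def by auto
    show "inj_on \<Lambda> \<tau> \<and> vec.independent (\<Lambda> ` \<tau>)"
    proof (cases "p \<in> {i,n}")
      case True
      define w where "w = (if p = i then n else i)"
      have qn: "q \<notin> {i,n}" using True notboth by blast
      have w: "w \<in> {1..m}" "w \<noteq> p" "w \<noteq> q" "{i,n} = {p,w}" "l1 w \<noteq> l1 p"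
        using True qn n i(1) unfolding w_def by auto
      have lw: "l1 w \<in> {vb, vc}" using vals w(1) w(5) assms(6) by auto
      have "\<tau> \<subseteq> {(p,1),(p,2),(w,0),(q,jq)}"
      proof
        fix x assume x: "x \<in> \<tau>"
        obtain v k where vk: "x = (v,k)" by (cases x)
        show "x \<in> {(p,1),(p,2),(w,0),(q,jq)}"
          using mem[of v k] x vk S0[of v] w(4) Sq qn unfolding jq_def by auto
      qed
      moreover have "good4 (\<Lambda> (p,1)) (\<Lambda> (p,2)) (\<Lambda> (w,0)) (\<Lambda> (q,jq))"
        using goodP[OF lw, of "\<phi> w" "\<psi> w" "of_bool (jq = 1)"] by (simp add: Lp Lq L0 jq0)
      ultimately show ?thesis by (rule good_sub)
    next
      case False
      note pn = False
      show ?thesis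
      proof (cases "q \<in> {i,n}")
        case True
        define w where "w = (if q = i then n else i)"
        have w: "w \<in> {1..m}" "w \<noteq> p" "w \<noteq> q" "{i,n} = {q,w}" "l1 w \<noteq> l1 q"
          using True pn n i(1) unfolding w_def by auto
        have lw: "l1 w \<in> {vb, vc}" using vals w(1) w(5) assms(7) by auto
        have "\<tau> \<subseteq> {(q,1),(q,2),(w,0),(p,ip)}"
        proof
          fix x assume x: "x \<in> \<tau>"
          obtain v k where vk: "x = (v,k)" by (cases x)
          show "x \<in> {(q,1),(q,2),(w,0),(p,ip)}"
            using mem[of v k] x vk S0[of v] w(4) Sp pn unfolding ip_def by auto
        qed
        moreover have "good4 (\<Lambda> (q,1)) (\<Lambda> (q,2)) (\<Lambda> (w,0)) (\<Lambda> (p,ip))"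
          using goodQ[OF lw, of "\<phi> w" "\<psi> w" "of_bool (ip = 1)"] by (simp add: Lp Lq L0 ip0)
        ultimately show ?thesis by (rule good_sub)
      next
        case False
        note qn = False
        have "\<tau> \<subseteq> {(i,0),(n,0),(p,ip),(q,jq)}"
        proof
          fix x assume x: "x \<in> \<tau>"
          obtain v k where vk: "x = (v,k)" by (cases x)
          show "x \<in> {(i,0),(n,0),(p,ip),(q,jq)}"
            using mem[of v k] x vk S0[of v] Sp Sq pn qn unfolding ip_def jq_def by auto
        qed
        moreover have "good4 (\<Lambda> (i,0)) (\<Lambda> (n,0)) (\<Lambda> (p,ip)) (\<Lambda> (q,jq))"
        proof -
          have c: "l1 i \<noteq> va \<and> l1 n \<noteq> va \<longrightarrow> \<phi> i = \<phi> n \<and> \<psi> i = \<psi> n"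
            using pc\<phi>[OF i(1)] pc\<psi>[OF i(1)] unfolding n_def by blast
          show ?thesis
            using goodN[of "l1 i" "l1 n" "\<phi> i" "\<phi> n" "\<psi> i" "\<psi> n" "of_bool (ip = 1)" "of_bool (jq = 1)"]
              vals i(1) n(1) n(3) c by (simp add: Lp Lq L0 ip0 jq0)
        qed
        ultimately show ?thesis by (rule good_sub)
      qed
    qed
  qed
  have P: "\<And>i j w. i \<in> {1,2} \<Longrightarrow> j \<in> {1,2} \<Longrightarrow>
     \<forall>v\<in>{1..m}. w v = invb (j = 1 \<and> \<psi> v) (invb (i = 1 \<and> \<phi> v) (l1 v)) \<Longrightarrow> proj_DJ_eq m p q \<Lambda> i j w"
    unfolding \<Lambda>_def using proj_lemma assms(5,6,7) vals by blast
  have "proj_DJ_eq m p q \<Lambda> 2 2 l1" by (rule P) (simp_all add: invb_def)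
  moreover have "proj_DJ_eq m p q \<Lambda> 1 2 (invert_pieces \<phi> l1)"
    by (rule P) (simp_all add: invb_def invert_pieces_def)
  moreover have "proj_DJ_eq m p q \<Lambda> 2 1 (invert_pieces \<psi> l1)"
    by (rule P) (simp_all add: invb_def invert_pieces_def)
  moreover have "proj_DJ_eq m p q \<Lambda> 1 1 (invert_pieces \<psi> (invert_pieces \<phi> l1))"
    by (rule P) (simp_all add: invb_def invert_pieces_def)
  ultimately show ?thesis using cm by blast
qed

end
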